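(* Let $F:\mathcal{H}\to\mathbb{R}$ be differentiable with $L$-Lipschitz gradient, $\arg\min F\ne\emptyset$, satisfying (PL) with $\mu>0$, and let $x(\cdot)$ be the solution of the heavy ball system with damping $\alpha>0$ and initial point $x_0$. Let $a,\delta\ge0$ and set $R:=\alpha-a+\delta$. Assume $$R>0,\qquad aR\le 2\mu,\qquad L-\alpha\delta+\frac{\delta}{2}R\le 0.$$ Then the function $V$ defined below satisfies $V(t)\le a(F(x_0)-F_* )e^{-Rt}$ for all $t\ge0$.
   Context: (PL) with constant $\mu>0$: $F(x)-F_*\le \frac{1}{2\mu}\|\nabla F(x)\|^2$ for all $x$, where $F_*=\min F$. Heavy ball system: $\ddot x(t)+\alpha\dot x(t)+\nabla F(x(t))=0$, $x(0)=x_0$, $\dot x(0)=0$ (unique $C^2$ global solution). For parameters $a,\delta$: $W(t)=F(x(t))-F_*$ and $V(t)=aW(t)+\langle\nabla F(x(t)),\dot x(t)\rangle+\frac\delta2\|\dot x(t)\|^2$. *)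

theory Defs
  imports "HOL-Analysis.Analysis"
begin

end

theory Submission
  imports Defs
begin

lemma dini_mono:
  fixes \<phi> :: "real \<Rightarrow> real"
  assumes cont: "continuous_on {a..b} \<phi>" and ab: "a \<le> b"
    and D: "\<And>t e. t \<in> {a..<b} \<Longrightarrow> e > 0 \<Longrightarrow> eventually (\<lambda>s. \<phi> s - \<phi> t \<le> e * (s - t)) (at_right t)"
  shows "\<phi> b \<le> \<phi> a"
proof -
  have key: "\<phi> b \<le> \<phi> a + e * (b - a)" if e: "e > 0" for e
  proof -
    define S where "S = {t \<in> {a..b}. \<phi> t - e * (t - a) \<le> \<phi> a}"
    have "closed {t \<in> {a..b}. \<phi> t - e * (t - a) \<le> (\<lambda>_. \<phi> a) t}"
      by (rule continuous_on_closed_Collect_le) (auto intro!: continuous_intros cont)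
    hence "closed S" by (simp add: S_def)
    moreover have "bounded S" by (rule bounded_subset[of "{a..b}"]) (auto simp: S_def)
    ultimately have cS: "compact S" by (simp add: compact_eq_bounded_closed)
    have "a \<in> S" using ab by (auto simp: S_def)
    then obtain s where s: "s \<in> S" "\<forall>y\<in>S. y \<le> s"
      using compact_attains_sup[OF cS] by blast
    have "s = b"
    proof (rule ccontr)
      assume "s \<noteq> b"
      with s(1) have sb: "s < b" "a \<le> s" by (auto simp: S_def)
      have "eventually (\<lambda>r. \<phi> r - \<phi> s \<le> e*(r-s)) (at_right s)" using D sb e by auto
      moreover have "eventually (\<lambda>r. r \<in> {s<..<b}) (at_right s)" using eventually_at_right_real[OF sb(1)] .
      ultimately have "eventually (\<lambda>r. \<phi> r - \<phi> s \<le> e*(r-s) \<and> r \<in> {s<..<b}) (at_right s)"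
        by (rule eventually_conj)
      then obtain r where r: "\<phi> r - \<phi> s \<le> e*(r-s)" "r \<in> {s<..<b}"
        using eventually_happens'[of "at_right s"] by auto
      have "\<phi> s - e * (s - a) \<le> \<phi> a" using s(1) by (auto simp: S_def)
      with r sb have "r \<in> S" by (auto simp: S_def algebra_simps)
      with s(2) r show False by auto
    qed
    with s(1) show ?thesis by (auto simp: S_def)
  qed
  show ?thesis
  proof (rule field_le_epsilon)
    fix e :: real assume e: "0 < e"
    have "\<phi> b \<le> \<phi> a + e / (b - a + 1) * (b - a)" using key[of "e / (b - a + 1)"] e ab by auto
    also have "e / (b - a + 1) * (b - a) \<le> e" using e ab by (simp add: field_simps)
    finally show "\<phi> b \<le> \<phi> a + e" by simp
  qed
qed

lemma vquot:
  fixes f :: "real \<Rightarrow> 'a::real_normed_vector"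
  assumes "(f has_vector_derivative v) (at t within {0..})" "t \<ge> 0"
  shows "((\<lambda>y. (f y - f t) /\<^sub>R (y - t)) \<longlongrightarrow> v) (at_right t)"
proof -
  have "((\<lambda>y. (1 / norm(y - t)) *\<^sub>R (f y - (f t + (y - t) *\<^sub>R v))) \<longlongrightarrow> 0) (at t within {0..})"
    using assms(1) unfolding has_vector_derivative_def has_derivative_within by blast
  hence "((\<lambda>y. (1 / norm(y - t)) *\<^sub>R (f y - (f t + (y - t) *\<^sub>R v))) \<longlongrightarrow> 0) (at_right t)"
    by (rule tendsto_within_subset) (use assms(2) in auto)
  hence "((\<lambda>y. (f y - f t) /\<^sub>R (y - t) - v) \<longlongrightarrow> 0) (at_right t)"
  proof (rule Lim_transform_eventually)
    show "eventually (\<lambda>y. (1 / norm(y - t)) *\<^sub>R (f y - (f t + (y - t) *\<^sub>R v)) = (f y - f t) /\<^sub>R (y - t) - v) (at_right t)"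
      unfolding eventually_at_right_field
    proof (rule exI[of _ "t+1"], intro conjI allI impI)
      fix y assume y: "t < y" "y < t + 1"
      have "(1 / norm(y - t)) *\<^sub>R (f y - (f t + (y - t) *\<^sub>R v))
          = (1 / (y - t)) *\<^sub>R (f y - f t) - ((1 / (y - t)) * (y - t)) *\<^sub>R v"
        using y by (simp add: scaleR_diff_right scaleR_add_right)
      also have "\<dots> = (f y - f t) /\<^sub>R (y - t) - v" using y by (simp add: divide_inverse)
      finally show "(1 / norm(y - t)) *\<^sub>R (f y - (f t + (y - t) *\<^sub>R v)) = (f y - f t) /\<^sub>R (y - t) - v" .
    qed simp
  qed
  thus ?thesis by (simp add: LIM_zero_iff)
qed

theorem lemma6p1:
  fixes F :: "'h::{real_inner, complete_space} \<Rightarrow> real"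
    and gradF :: "'h \<Rightarrow> 'h"
    and x x' x'' :: "real \<Rightarrow> 'h"
    and x0 :: 'h
    and L \<mu> \<alpha> a \<delta> :: real
  assumes grad: "\<And>y. (F has_derivative (\<lambda>h. gradF y \<bullet> h)) (at y)"
    and lip: "L-lipschitz_on UNIV gradF"
    and argmin_ne: "\<exists>z. \<forall>y. F z \<le> F y"
    and mu_pos: "\<mu> > 0"
    and PL: "\<And>y. F y - (INF z. F z) \<le> 1 / (2 * \<mu>) * (norm (gradF y))\<^sup>2"
    and alpha_pos: "\<alpha> > 0"
    and dx: "\<And>t. t \<ge> 0 \<Longrightarrow> (x has_vector_derivative x' t) (at t within {0..})"
    and ddx: "\<And>t. t \<ge> 0 \<Longrightarrow> (x' has_vector_derivative x'' t) (at t within {0..})"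
    and ddx_cont: "continuous_on {0..} x''"
    and ode: "\<And>t. t \<ge> 0 \<Longrightarrow> x'' t + \<alpha> *\<^sub>R x' t + gradF (x t) = 0"
    and init_pos: "x 0 = x0"
    and init_vel: "x' 0 = 0"
    and a_nonneg: "a \<ge> 0"
    and delta_nonneg: "\<delta> \<ge> 0"
    and R_pos: "\<alpha> - a + \<delta> > 0"
    and cond1: "a * (\<alpha> - a + \<delta>) \<le> 2 * \<mu>"
    and cond2: "L - \<alpha> * \<delta> + \<delta> / 2 * (\<alpha> - a + \<delta>) \<le> 0"
  shows "\<forall>t \<ge> 0.
           a * (F (x t) - (INF z. F z)) + gradF (x t) \<bullet> x' t + \<delta> / 2 * (norm (x' t))\<^sup>2
             \<le> a * (F x0 - (INF z. F z)) * exp (- (\<alpha> - a + \<delta>) * t)"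
proof -
  define c where "c = (INF z. F z)"
  define R where "R = \<alpha> - a + \<delta>"
  have bdd: "bdd_below (range F)" using argmin_ne by (auto intro: bdd_belowI2)
  have Wnn: "0 \<le> F y - c" for y using cINF_lower[OF bdd, of y] by (simp add: c_def)
  have L0: "0 \<le> L" using lip lipschitz_on_nonneg by blast
  have Fcont: "continuous_on UNIV F"
    by (rule continuous_at_imp_continuous_on) (use grad has_derivative_continuous in blast)
  have gcont: "continuous_on UNIV gradF" using lipschitz_on_continuous_on[OF lip] .
  have xcont: "continuous_on {0..} x"
    by (rule has_derivative_continuous_on) (use dx in \<open>auto simp: has_vector_derivative_def\<close>)
  have x'cont: "continuous_on {0..} x'"
    by (rule has_derivative_continuous_on) (use ddx in \<open>auto simp: has_vector_derivative_def\<close>)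
  define U where "U t = exp (R*t) * (a*(F(x t) - c) + gradF (x t) \<bullet> x' t + \<delta>/2 * (norm (x' t))\<^sup>2)" for t
  have Ucont: "continuous_on {0..} U"
    unfolding U_def
    by (intro continuous_intros continuous_on_compose2[OF Fcont xcont] continuous_on_compose2[OF gcont xcont] x'cont) auto
  have local: "eventually (\<lambda>s. U s - U t \<le> e*(s-t)) (at_right t)" if t: "t \<ge> 0" and e: "e > 0" for t e
  proof -
    define g where "g = gradF (x t)"
    define v where "v = x' t"
    define w where "w = x'' t"
    define E where "E = exp (R*t)"
    define Ut where "Ut s = exp (R * s) * (a * (F (x s) - c) + g \<bullet> x' s + \<delta> / 2 * (x' s \<bullet> x' s))" for s
    define D where "D = E*(R*(a*(F(x t)-c) + g\<bullet>v + \<delta>/2*(v\<bullet>v))) + E*(a*(g\<bullet>v) + g\<bullet>w + \<delta>*(v\<bullet>w))"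
    have hx: "(x has_derivative (\<lambda>h. h *\<^sub>R v)) (at t within {0..})"
      using dx[OF t] by (simp add: has_vector_derivative_def v_def)
    have hx': "(x' has_derivative (\<lambda>h. h *\<^sub>R w)) (at t within {0..})"
      using ddx[OF t] by (simp add: has_vector_derivative_def w_def)
    have hFx: "((\<lambda>s. F (x s)) has_field_derivative (g \<bullet> v)) (at t within {0..})"
      using has_derivative_compose[OF hx grad[of "x t"]]
      by (simp add: has_field_derivative_def g_def mult_commute_abs)
    have hg: "((\<lambda>s. g \<bullet> x' s) has_field_derivative (g \<bullet> w)) (at t within {0..})"
      using has_derivative_inner_right[OF hx', of g]
      by (simp add: has_field_derivative_def mult_commute_abs)
    have hvv: "((\<lambda>s. x' s \<bullet> x' s) has_field_derivative (2 * (v \<bullet> w))) (at t within {0..})"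
      using has_derivative_inner[OF hx' hx']
      by (simp add: has_field_derivative_def v_def inner_commute algebra_simps mult_commute_abs)
    have hU: "(Ut has_field_derivative D) (at t within {0..})"
      unfolding Ut_def
      by (rule derivative_eq_intros hFx hg hvv | simp)+
         (simp add: D_def E_def v_def algebra_simps)
    have quot: "((\<lambda>s. (Ut s - Ut t) / (s - t)) \<longlongrightarrow> D) (at_right t)"
      using hU unfolding has_field_derivative_iff
      by (rule tendsto_within_subset) (use t in auto)
    have vq: "((\<lambda>s. (x s - x t) /\<^sub>R (s - t)) \<longlongrightarrow> v) (at_right t)"
      using vquot[OF dx[OF t] t] by (simp add: v_def)
    have "continuous (at t within {0..}) x'"
      using has_derivative_continuous[OF hx'] .
    hence "(x' \<longlongrightarrow> v) (at t within {0..})" by (simp add: continuous_within v_def)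
    hence x'c: "(x' \<longlongrightarrow> v) (at_right t)"
      by (rule tendsto_within_subset) (use t in auto)
    define B where "B s = (Ut s - Ut t) / (s - t) + exp (R * s) * L * norm ((x s - x t) /\<^sub>R (s - t)) * norm (x' s)" for s
    have Blim: "(B \<longlongrightarrow> D + E * L * norm v * norm v) (at_right t)"
      unfolding B_def E_def
      by (intro tendsto_intros quot vq x'c)
    have Dneg: "D + E * L * norm v * norm v \<le> 0"
    proof -
      define W where "W = F (x t) - c"
      have W0: "0 \<le> W" using Wnn by (simp add: W_def)
      have weq: "w = - (\<alpha> *\<^sub>R v) - g" using ode[OF t] unfolding w_def v_def g_def
        by (simp add: algebra_simps eq_neg_iff_add_eq_0)
      have gw: "g \<bullet> w = - \<alpha> * (g \<bullet> v) - g \<bullet> g" by (simp add: weq inner_simps)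
      have vw: "v \<bullet> w = - \<alpha> * (v \<bullet> v) - g \<bullet> v" by (simp add: weq inner_simps inner_commute)
      have nv: "norm v * norm v = v \<bullet> v" by (simp add: power2_norm_eq_inner[symmetric] power2_eq_square)
      have "D + E * L * norm v * norm v = E * (R * a * W - g \<bullet> g + (L - \<alpha> * \<delta> + \<delta> / 2 * R) * (v \<bullet> v))"
        unfolding D_def W_def nv gw vw R_def by (simp add: algebra_simps) (simp add: nv)
      also have "\<dots> \<le> 0"
      proof -
        have "W \<le> 1 / (2 * \<mu>) * (norm g)\<^sup>2" using PL[of "x t"] by (simp add: W_def c_def g_def)
        hence "2 * \<mu> * W \<le> g \<bullet> g" using mu_pos by (simp add: field_simps power2_norm_eq_inner)
        moreover have "R * a * W \<le> 2 * \<mu> * W" using cond1 W0 unfolding R_def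
          by (intro mult_right_mono) (auto simp: algebra_simps)
        moreover have "(L - \<alpha> * \<delta> + \<delta> / 2 * R) * (v \<bullet> v) \<le> 0"
          using cond2 unfolding R_def by (intro mult_nonpos_nonneg) auto
        ultimately have "R * a * W - g \<bullet> g + (L - \<alpha> * \<delta> + \<delta> / 2 * R) * (v \<bullet> v) \<le> 0" by linarith
        moreover have "E > 0" by (simp add: E_def)
        ultimately show ?thesis by (simp add: mult_nonneg_nonpos)
      qed
      finally show ?thesis .
    qed
    have ev1: "eventually (\<lambda>s. B s < e) (at_right t)"
      using order_tendstoD(2)[OF Blim] Dneg e by auto
    have ev2: "eventually (\<lambda>s. s > t) (at_right t)"
      unfolding eventually_at_right_field by (rule exI[of _ "t+1"]) auto
    show ?thesis using ev1 ev2
    proof eventually_elim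
      case (elim s)
      have s0: "s \<ge> 0" using elim t by auto
      have Ut_t: "U t = Ut t" by (simp add: U_def Ut_def g_def power2_norm_eq_inner)
      have "U s - Ut s = exp (R * s) * ((gradF (x s) - g) \<bullet> x' s)"
        by (simp add: U_def Ut_def power2_norm_eq_inner algebra_simps inner_diff_left)
      also have "\<dots> \<le> exp (R * s) * (norm (gradF (x s) - g) * norm (x' s))"
        by (intro mult_left_mono norm_cauchy_schwarz) auto
      also have "\<dots> \<le> exp (R * s) * (L * norm (x s - x t) * norm (x' s))"
        using lipschitz_on_normD[OF lip, of "x s" "x t"]
        by (intro mult_left_mono mult_right_mono) (auto simp: g_def)
      also have "norm (x s - x t) = (s - t) * norm ((x s - x t) /\<^sub>R (s - t))"
        using elim by simp
      finally have 1: "U s - Ut s \<le> (s - t) * (exp (R * s) * L * norm ((x s - x t) /\<^sub>R (s - t)) * norm (x' s))"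
        by (simp add: algebra_simps)
      have 2: "Ut s - Ut t = (s - t) * ((Ut s - Ut t) / (s - t))" using elim by simp
      have "U s - U t \<le> (s - t) * B s" using 1 2 Ut_t unfolding B_def by (simp add: algebra_simps)
      also have "\<dots> \<le> (s - t) * e" using elim by (intro mult_left_mono) auto
      finally show ?case by (simp add: mult.commute)
    qed
  qed
  have mono: "U T \<le> U 0" if T: "T \<ge> 0" for T
  proof (rule dini_mono[of 0 T U])
    show "continuous_on {0..T} U" by (rule continuous_on_subset[OF Ucont]) auto
  qed (use T local in auto)
  have U0: "U 0 = a * (F x0 - c)" by (simp add: U_def init_pos init_vel)
  show ?thesis
  proof (intro allI impI)
    fix t :: real assume t: "t \<ge> 0"
    have "a * (F (x t) - c) + gradF (x t) \<bullet> x' t + \<delta> / 2 * (norm (x' t))\<^sup>2 = exp (- R * t) * U t"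
      by (simp add: U_def exp_minus field_simps)
    also have "\<dots> \<le> exp (- R * t) * U 0" using mono[OF t] by (intro mult_left_mono) auto
    finally show "a * (F (x t) - (INF z. F z)) + gradF (x t) \<bullet> x' t + \<delta> / 2 * (norm (x' t))\<^sup>2
             \<le> a * (F x0 - (INF z. F z)) * exp (- (\<alpha> - a + \<delta>) * t)"
      by (simp add: U0 c_def R_def mult.commute)
  qed
qed

end
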